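(* Let $(N_t)_{t\in\mathbb N_0}$ be an adapted sequence of nonnegative integrable random variables on a filtered probability space with expectation $\mathtt E$, and let $N_\infty:=\limsup_{t\to\infty}N_t$ (for a random time $T$, $N_T$ is defined pathwise, using $N_\infty$ on $\{T=\infty\}$). Consider: (i) $\mathtt E[\sup_{t\in\mathbb N_0}N_t]\le1$; (ii) $\mathtt E[N_T]\le1$ for all random times $T$ (possibly infinite, not necessarily stopping times); (iii) $\mathtt E[N_\tau]\le1$ for all stopping times $\tau$ (possibly infinite); (iv) $\mathtt E[g(1)\vee\sup_{t\in\mathbb N_0}g(N_t)]\le1$ for every nonnegative nondecreasing function $g$ on $[0,\infty)$ with $\int_1^\infty g(y)/y^2\,\mathrm dy=1$; in particular $\mathtt E[1\vee\sup_{t\in\mathbb N_0}\sqrt{N_t}]\le2$. Then (i) and (ii) are equivalent, (i) (equivalently (ii)) implies (iii), and (iii) implies (iv). *)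

theory Defs
  imports "HOL-Probability.Probability"
begin

text \<open>Value of the process N at a (possibly infinite) random time T, taken pathwise,
  with N_infinity := limsup_t N_t on {T = infinity}. Values in ennreal (N_infinity may be infinite).\<close>
definition stopped_at :: "(nat \<Rightarrow> 'a \<Rightarrow> real) \<Rightarrow> ('a \<Rightarrow> enat) \<Rightarrow> 'a \<Rightarrow> ennreal" where
  "stopped_at N T \<omega> =
     (if T \<omega> = \<infinity> then limsup (\<lambda>t. ennreal (N t \<omega>)) else ennreal (N (the_enat (T \<omega>)) \<omega>))"

definition stopping_time_enat :: "(nat \<Rightarrow> 'a measure) \<Rightarrow> ('a \<Rightarrow> enat) \<Rightarrow> bool" where
  "stopping_time_enat F T \<longleftrightarrow> (\<forall>t::nat. Measurable.pred (F t) (\<lambda>\<omega>. T \<omega> \<le> enat t))"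

end

theory Submission imports Defs "HOL-Real_Asymp.Real_Asymp" begin

lemma layer_cake_pt:
  fixes x :: ennreal
  shows "(\<integral>\<^sup>+ s. (if 0 \<le> s \<and> ennreal s < x then 1 else 0) \<partial>lborel) = x"
proof (cases x rule: ennreal_cases)
  case (real r)
  have "(\<integral>\<^sup>+ s. (if 0 \<le> s \<and> ennreal s < x then 1 else 0) \<partial>lborel) = (\<integral>\<^sup>+ s. indicator {0..<r} s \<partial>lborel)"
    using real by (intro nn_integral_cong) (auto simp: ennreal_less_iff indicator_def)
  also have "\<dots> = x" using real by simp
  finally show ?thesis .
next
  case top
  have "(\<integral>\<^sup>+ s. (if 0 \<le> s \<and> ennreal s < x then 1 else 0) \<partial>lborel) = (\<integral>\<^sup>+ s. indicator {0::real..} s \<partial>lborel)"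
    unfolding top by (simp add: ennreal_less_top indicator_def of_bool_def)
  also have "\<dots> = emeasure lborel {0::real..}" by simp
  also have "\<dots> = \<top>"
  proof -
    have "ennreal (real n) \<le> emeasure lborel {0::real..}" for n
    proof -
      have "ennreal (real n) = emeasure lborel {0..real n}" by simp
      also have "\<dots> \<le> emeasure lborel {0::real..}" by (intro emeasure_mono) auto
      finally show ?thesis .
    qed
    then have "(SUP n. of_nat n :: ennreal) \<le> emeasure lborel {0::real..}"
      by (intro SUP_least) (simp add: ennreal_of_nat_eq_real_of_nat)
    then show ?thesis by (simp add: ennreal_SUP_of_nat_eq_top top_unique)
  qed
  finally show ?thesis using top by simp
qed

lemma tail_integral:
  fixes c :: real assumes "c > 0"
  shows "(\<integral>\<^sup>+ y. ennreal (1/y\<^sup>2) * indicator {c<..} y \<partial>lborel) = ennreal (1/c)"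
proof -
  have "(\<integral>\<^sup>+ y. ennreal (1/y\<^sup>2) * indicator {c<..} y \<partial>lborel) = (\<integral>\<^sup>+ y. ennreal (1/y\<^sup>2) * indicator {c..} y \<partial>lborel)"
    using AE_lborel_singleton[of c] by (intro nn_integral_cong_AE) (auto elim!: eventually_mono simp: indicator_def)
  also have "\<dots> = ennreal (0 - (- 1 / c))"
  proof (rule nn_integral_FTC_atLeast)
    show "(\<lambda>y::real. 1 / y\<^sup>2) \<in> borel_measurable borel" by measurable
    show "((\<lambda>y. - 1 / y) has_real_derivative 1 / x\<^sup>2) (at x)" if "c \<le> x" for x
      using that assms by (auto intro!: derivative_eq_intros simp: power2_eq_square field_simps)
    show "0 \<le> 1 / x\<^sup>2" for x :: real by simp
    show "((\<lambda>y::real. - 1 / y) \<longlongrightarrow> 0) at_top" by real_asymp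
  qed
  finally show ?thesis by simp
qed

lemma limsup_not_attained:
  fixes f :: "nat \<Rightarrow> 'a::complete_linorder"
  assumes "\<forall>t. f t \<noteq> (SUP t. f t)" shows "limsup f = (SUP t. f t)"
proof -
  have "(SUP t\<in>{n..}. f t) = (SUP t. f t)" for n
  proof (induction n)
    case 0 show ?case by simp
  next
    case (Suc n)
    have "insert n {Suc n..} = {n..}" by auto
    hence "(SUP t\<in>{n..}. f t) = sup (f n) (SUP t\<in>{Suc n..}. f t)" by (metis SUP_insert)
    with Suc have e: "sup (f n) (SUP t\<in>{Suc n..}. f t) = (SUP t. f t)" by simp
    have "(SUP t\<in>{Suc n..}. f t) \<le> (SUP t. f t)" by (rule SUP_subset_mono) auto
    with e assms show ?case by (metis sup.absorb_iff2 sup_commute linear sup.orderE)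
  qed
  then show ?thesis by (simp add: limsup_INF_SUP)
qed
theorem lemma3:
  fixes M :: "'a measure" and F :: "nat \<Rightarrow> 'a measure" and N :: "nat \<Rightarrow> 'a \<Rightarrow> real"
  assumes "prob_space M"
    and "\<And>t. space (F t) = space M"
    and "\<And>t. sets (F t) \<subseteq> sets M"
    and "\<And>s t. s \<le> t \<Longrightarrow> sets (F s) \<subseteq> sets (F t)"
    and "\<And>t. N t \<in> borel_measurable (F t)"
    and "\<And>t. integrable M (N t)"
    and "\<And>t \<omega>. \<omega> \<in> space M \<Longrightarrow> N t \<omega> \<ge> 0"
  defines "cond_i \<equiv> (\<integral>\<^sup>+ \<omega>. (SUP t. ennreal (N t \<omega>)) \<partial>M) \<le> 1"
    and "cond_ii \<equiv> (\<forall>T. T \<in> M \<rightarrow>\<^sub>M count_space UNIV \<longrightarrow>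
                        (\<integral>\<^sup>+ \<omega>. stopped_at N T \<omega> \<partial>M) \<le> 1)"
    and "cond_iii \<equiv> (\<forall>\<tau>. stopping_time_enat F \<tau> \<longrightarrow>
                        (\<integral>\<^sup>+ \<omega>. stopped_at N \<tau> \<omega> \<partial>M) \<le> 1)"
    and "cond_iv \<equiv> (\<forall>g :: real \<Rightarrow> real.
                       (\<forall>y\<ge>0. g y \<ge> 0) \<longrightarrow> mono_on {0..} g \<longrightarrow>
                       (\<integral>\<^sup>+ y\<in>{1..}. ennreal (g y / y\<^sup>2) \<partial>lborel) = 1 \<longrightarrow>
                       (\<integral>\<^sup>+ \<omega>. sup (ennreal (g 1)) (SUP t. ennreal (g (N t \<omega>))) \<partial>M) \<le> 1)"
  shows "(cond_i \<longleftrightarrow> cond_ii) \<and> (cond_i \<longrightarrow> cond_iii)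
         \<and> (cond_iii \<longrightarrow> cond_iv
              \<and> (\<integral>\<^sup>+ \<omega>. sup 1 (SUP t. ennreal (sqrt (N t \<omega>))) \<partial>M) \<le> 2)"
proof -
  interpret P: prob_space M by fact
  have Nm[measurable]: "N t \<in> borel_measurable M" for t
    using assms(6) by (rule borel_measurable_integrable)
  have sup_bound: "stopped_at N T \<omega> \<le> (SUP t. ennreal (N t \<omega>))" for T \<omega>
  proof (cases "T \<omega> = \<infinity>")
    case True
    have "limsup (\<lambda>t. ennreal (N t \<omega>)) \<le> (SUP t\<in>{0..}. ennreal (N t \<omega>))"
      unfolding limsup_INF_SUP by (rule INF_lower) simp
    then show ?thesis using True by (simp add: stopped_at_def)
  qed (auto simp: stopped_at_def intro: SUP_upper)
  have i_ii: "cond_ii" if cond_i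
    using that unfolding cond_i_def cond_ii_def
    by (auto intro: order_trans[OF nn_integral_mono[OF sup_bound]])
  have i_iii: "cond_iii" if cond_i
    using that unfolding cond_i_def cond_iii_def
    by (auto intro: order_trans[OF nn_integral_mono[OF sup_bound]])
  have ii_i: "cond_i" if ii: cond_ii
  proof -
    define S where "S \<omega> = (SUP t. ennreal (N t \<omega>))" for \<omega>
    define T where "T \<omega> = (if \<exists>t. ennreal (N t \<omega>) = S \<omega> then enat (LEAST t. ennreal (N t \<omega>) = S \<omega>) else \<infinity>)" for \<omega>
    have Sm[measurable]: "S \<in> borel_measurable M" unfolding S_def by measurable
    have "T \<in> M \<rightarrow>\<^sub>M count_space UNIV"
      unfolding measurable_count_space_eq_countable[OF countableI_type]
    proof (intro conjI ballI)
      show "T \<in> space M \<rightarrow> UNIV" by simp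
      fix a :: enat assume "a \<in> UNIV"
      show "T -` {a} \<inter> space M \<in> sets M"
      proof (cases a)
        case (enat n)
        have "T -` {a} \<inter> space M = {\<omega>\<in>space M. ennreal (N n \<omega>) = S \<omega> \<and> (\<forall>m<n. ennreal (N m \<omega>) \<noteq> S \<omega>)}"
        proof (intro set_eqI iffI)
          fix \<omega> assume "\<omega> \<in> T -` {a} \<inter> space M"
          then have ex: "\<exists>t. ennreal (N t \<omega>) = S \<omega>" and L: "(LEAST t. ennreal (N t \<omega>) = S \<omega>) = n"
            and om: "\<omega> \<in> space M"
            using enat by (auto simp: T_def split: if_splits)
          show "\<omega> \<in> {\<omega>\<in>space M. ennreal (N n \<omega>) = S \<omega> \<and> (\<forall>m<n. ennreal (N m \<omega>) \<noteq> S \<omega>)}"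
            using LeastI_ex[OF ex] not_less_Least[of _ "\<lambda>t. ennreal (N t \<omega>) = S \<omega>"] L om by auto
        next
          fix \<omega> assume om: "\<omega> \<in> {\<omega>\<in>space M. ennreal (N n \<omega>) = S \<omega> \<and> (\<forall>m<n. ennreal (N m \<omega>) \<noteq> S \<omega>)}"
          then have "(LEAST t. ennreal (N t \<omega>) = S \<omega>) = n"
            by (intro Least_equality) (auto simp: not_less[symmetric])
          then show "\<omega> \<in> T -` {a} \<inter> space M" using om by (auto simp: T_def enat)
        qed
        also have "\<dots> \<in> sets M" by measurable
        finally show ?thesis .
      next
        case infinity
        have "T -` {a} \<inter> space M = {\<omega>\<in>space M. \<forall>t. ennreal (N t \<omega>) \<noteq> S \<omega>}"
          by (auto simp: T_def infinity split: if_splits)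
        also have "\<dots> \<in> sets M" by measurable
        finally show ?thesis .
      qed
    qed
    then have le: "(\<integral>\<^sup>+\<omega>. stopped_at N T \<omega> \<partial>M) \<le> 1" using ii unfolding cond_ii_def by blast
    have "stopped_at N T \<omega> = S \<omega>" for \<omega>
    proof (cases "\<exists>t. ennreal (N t \<omega>) = S \<omega>")
      case True then show ?thesis using LeastI_ex[OF True] by (simp add: stopped_at_def T_def)
    next
      case False then show ?thesis by (simp add: stopped_at_def T_def S_def limsup_not_attained)
    qed
    then show ?thesis using le unfolding cond_i_def S_def by simp
  qed
  have iii_iv: cond_iv if iii: cond_iii
  proof -
    have ville: "emeasure M {\<omega>\<in>space M. \<exists>t. c \<le> N t \<omega>} \<le> ennreal (1/c)" if c: "c > 0" for c :: real
    proof -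
      define E where "E = {\<omega>\<in>space M. \<exists>t. c \<le> N t \<omega>}"
      define \<tau> where "\<tau> \<omega> = (if \<exists>t. c \<le> N t \<omega> then enat (LEAST t. c \<le> N t \<omega>) else \<infinity>)" for \<omega>
      have "stopping_time_enat F \<tau>" unfolding stopping_time_enat_def
      proof
        fix t
        have eq: "(\<lambda>\<omega>. \<tau> \<omega> \<le> enat t) = (\<lambda>\<omega>. \<exists>s\<in>{..t}. c \<le> N s \<omega>)"
        proof (rule ext)
          fix \<omega> show "(\<tau> \<omega> \<le> enat t) = (\<exists>s\<in>{..t}. c \<le> N s \<omega>)"
          proof
            assume "\<tau> \<omega> \<le> enat t"
            then have ex: "\<exists>t. c \<le> N t \<omega>" and "(LEAST t. c \<le> N t \<omega>) \<le> t"
              by (auto simp: \<tau>_def split: if_splits)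
            then show "\<exists>s\<in>{..t}. c \<le> N s \<omega>" using LeastI_ex[OF ex] by auto
          next
            assume "\<exists>s\<in>{..t}. c \<le> N s \<omega>"
            then obtain s where "s \<le> t" "c \<le> N s \<omega>" by auto
            then show "\<tau> \<omega> \<le> enat t" using Least_le[of "\<lambda>t. c \<le> N t \<omega>" s] by (auto simp: \<tau>_def)
          qed
        qed
        have Nst: "N s \<in> borel_measurable (F t)" if "s \<in> {..t}" for s
          using measurable_from_subalg[of "F t" "F s" "N s" borel] assms(2,4,5) that
          by (auto simp: subalgebra_def)
        show "Measurable.pred (F t) (\<lambda>\<omega>. \<tau> \<omega> \<le> enat t)" unfolding eq
          by (intro pred_intros_countable_bounded(4)) (use Nst in measurable)
      qed
      then have le: "(\<integral>\<^sup>+\<omega>. stopped_at N \<tau> \<omega> \<partial>M) \<le> 1" using iii unfolding cond_iii_def by blast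
      have Em: "E \<in> sets M" unfolding E_def by measurable
      have "ennreal c * emeasure M E = (\<integral>\<^sup>+\<omega>. ennreal c * indicator E \<omega> \<partial>M)"
        using Em by (simp add: nn_integral_cmult_indicator)
      also have "\<dots> \<le> (\<integral>\<^sup>+\<omega>. stopped_at N \<tau> \<omega> \<partial>M)"
      proof (rule nn_integral_mono)
        fix \<omega> assume "\<omega> \<in> space M"
        show "ennreal c * indicator E \<omega> \<le> stopped_at N \<tau> \<omega>"
        proof (cases "\<omega> \<in> E")
          case True
          then have ex: "\<exists>t. c \<le> N t \<omega>" by (auto simp: E_def)
          then show ?thesis using LeastI_ex[OF ex] True by (simp add: stopped_at_def \<tau>_def ennreal_leI)
        qed simp
      qed
      finally have cE: "ennreal c * emeasure M E \<le> 1" using le by simp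
      have "emeasure M E = ennreal (1/c) * (ennreal c * emeasure M E)"
        using c by (simp add: mult.assoc[symmetric] ennreal_mult[symmetric])
      also have "\<dots> \<le> ennreal (1/c) * 1" by (intro mult_left_mono cE) auto
      finally show ?thesis by (simp add: E_def)
    qed
    show ?thesis unfolding cond_iv_def
    proof (intro allI impI)
      fix g :: "real \<Rightarrow> real"
      assume gpos: "\<forall>y\<ge>0. 0 \<le> g y" and gmono: "mono_on {0..} g"
        and gint: "(\<integral>\<^sup>+y\<in>{1..}. ennreal (g y / y\<^sup>2) \<partial>lborel) = 1"
      define g' where "g' y = g (max 0 y)" for y
      have g'mono: "mono g'" unfolding mono_def g'_def by (auto intro!: mono_onD[OF gmono])
      have g'pos: "0 \<le> g' y" for y using gpos by (simp add: g'_def)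
      have g'm[measurable]: "g' \<in> borel_measurable borel" by (rule borel_measurable_mono[OF g'mono])
      define G where "G \<omega> = sup (ennreal (g' 1)) (SUP t. ennreal (g' (N t \<omega>)))" for \<omega>
      have Gm[measurable]: "G \<in> borel_measurable M" unfolding G_def by measurable
      have LHS: "(\<integral>\<^sup>+\<omega>. sup (ennreal (g 1)) (SUP t. ennreal (g (N t \<omega>))) \<partial>M) = (\<integral>\<^sup>+\<omega>. G \<omega> \<partial>M)"
        by (intro nn_integral_cong) (simp add: G_def g'_def assms(7))
      define P where "P s = (\<integral>\<^sup>+\<omega>. (if 0 \<le> s \<and> ennreal s < G \<omega> then 1 else 0) \<partial>M)" for s
      define Q where "Q s = (\<integral>\<^sup>+y. (if 1 \<le> y \<and> 0 \<le> s \<and> s < g' y then ennreal (1/y\<^sup>2) else 0) \<partial>lborel)" for s :: real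
      interpret PS: pair_sigma_finite M "lborel :: real measure"
        by (simp add: pair_sigma_finite_def P.sigma_finite_measure_axioms lborel.sigma_finite_measure_axioms)
      have LLi: "pair_sigma_finite (lborel :: real measure) (lborel :: real measure)"
        by (simp add: pair_sigma_finite_def lborel.sigma_finite_measure_axioms)
      have PQ: "P s \<le> Q s" for s
      proof (cases "0 \<le> s")
        case False then have "P s = 0" by (simp add: P_def)
        then show ?thesis by simp
      next
        case s0: True
        have P1: "P s \<le> 1"
        proof -
          have "P s \<le> (\<integral>\<^sup>+\<omega>. 1 \<partial>M)" unfolding P_def by (intro nn_integral_mono) auto
          also have "\<dots> = 1" by (simp add: P.emeasure_space_1)
          finally show ?thesis .
        qed
        show ?thesis
        proof (cases "s < g' 1")
          case True
          have "1 = ennreal (1/1)" by simp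
          also have "\<dots> = (\<integral>\<^sup>+ y. ennreal (1/y\<^sup>2) * indicator {1<..} y \<partial>lborel)"
            by (rule tail_integral[symmetric]) simp
          also have "\<dots> \<le> Q s" unfolding Q_def
            using s0 True monoD[OF g'mono, of 1]
            by (intro nn_integral_mono) (auto simp: indicator_def intro: less_le_trans)
          finally show ?thesis using P1 by (rule order_trans[rotated])
        next
          case False
          define A where "A = {y. 1 \<le> y \<and> s < g' y}"
          have inA: "N t \<omega> \<in> A" if "s < g' (N t \<omega>)" for \<omega> t
          proof -
            have "\<not> N t \<omega> < 1"
            proof
              assume "N t \<omega> < 1" then have "g' (N t \<omega>) \<le> g' 1" by (intro monoD[OF g'mono]) simp
              with that False show False by simp
            qed
            then show ?thesis using that by (simp add: A_def)
          qed
          have exA: "\<exists>t. N t \<omega> \<in> A" if "ennreal s < G \<omega>" for \<omega>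
          proof -
            from that have "ennreal s < ennreal (g' 1) \<or> ennreal s < (SUP t. ennreal (g' (N t \<omega>)))"
              by (simp add: G_def sup_max less_max_iff_disj)
            then obtain t where "ennreal s < ennreal (g' (N t \<omega>))"
              using False s0 g'pos by (auto simp: less_SUP_iff ennreal_less_iff)
            then have "s < g' (N t \<omega>)" using g'pos s0 by (simp add: ennreal_less_iff)
            with inA show ?thesis by blast
          qed
          show ?thesis
          proof (cases "A = {}")
            case True
            have "P s = (\<integral>\<^sup>+\<omega>. 0 \<partial>M)" unfolding P_def
              by (intro nn_integral_cong) (use exA True in auto)
            then show ?thesis by simp
          next
            case Ane: False
            define c where "c = Inf A"
            have bdd: "bdd_below A" by (auto simp: A_def bdd_below_def)
            have c1: "1 \<le> c" unfolding c_def using Ane by (intro cInf_greatest) (auto simp: A_def)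
            have cA: "c \<le> a" if "a \<in> A" for a using cInf_lower[OF that bdd] c_def by simp
            have sub: "y \<in> A" if cy: "c < y" for y
            proof -
              obtain a where a: "a \<in> A" "a < y" using cInf_lessD[OF Ane] cy c_def by auto
              then show ?thesis using monoD[OF g'mono, of a y] by (auto simp: A_def)
            qed
            have "P s \<le> (\<integral>\<^sup>+\<omega>. indicator {\<omega>\<in>space M. \<exists>t. c \<le> N t \<omega>} \<omega> \<partial>M)" unfolding P_def
            proof (intro nn_integral_mono)
              fix \<omega> assume om: "\<omega> \<in> space M"
              show "(if 0 \<le> s \<and> ennreal s < G \<omega> then 1 else 0::ennreal) \<le> indicator {\<omega>\<in>space M. \<exists>t. c \<le> N t \<omega>} \<omega>"
                using exA[of \<omega>] cA om by (auto simp: indicator_def)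
            qed
            also have "\<dots> = emeasure M {\<omega>\<in>space M. \<exists>t. c \<le> N t \<omega>}"
              by (intro nn_integral_indicator) measurable
            also have "\<dots> \<le> ennreal (1/c)" using ville c1 by simp
            also have "\<dots> = (\<integral>\<^sup>+ y. ennreal (1/y\<^sup>2) * indicator {c<..} y \<partial>lborel)"
              using c1 by (intro tail_integral[symmetric]) simp
            also have "\<dots> \<le> Q s" unfolding Q_def
              using s0 c1 by (intro nn_integral_mono) (auto simp: indicator_def A_def dest: sub)
            finally show ?thesis .
          qed
        qed
      qed
      have "(\<integral>\<^sup>+\<omega>. G \<omega> \<partial>M) = (\<integral>\<^sup>+\<omega>. (\<integral>\<^sup>+s. (if 0 \<le> s \<and> ennreal s < G \<omega> then 1 else 0) \<partial>lborel) \<partial>M)"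
        by (simp add: layer_cake_pt)
      also have "\<dots> = (\<integral>\<^sup>+s. P s \<partial>lborel)" unfolding P_def
        by (rule PS.Fubini'[symmetric]) measurable
      also have "\<dots> \<le> (\<integral>\<^sup>+s. Q s \<partial>lborel)" by (intro nn_integral_mono PQ)
      also have "\<dots> = (\<integral>\<^sup>+y. (\<integral>\<^sup>+s. (if 1 \<le> y \<and> 0 \<le> s \<and> s < g' y then ennreal (1/y\<^sup>2) else 0) \<partial>lborel) \<partial>lborel)"
        unfolding Q_def by (rule pair_sigma_finite.Fubini'[OF LLi]) measurable
      also have "\<dots> = (\<integral>\<^sup>+y\<in>{1..}. ennreal (g y / y\<^sup>2) \<partial>lborel)"
      proof (intro nn_integral_cong)
        fix y :: real
        have "(\<integral>\<^sup>+s. (if 1 \<le> y \<and> 0 \<le> s \<and> s < g' y then ennreal (1/y\<^sup>2) else 0) \<partial>lborel)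
            = (\<integral>\<^sup>+s. (ennreal (1/y\<^sup>2) * indicator {1..} y) * (if 0 \<le> s \<and> ennreal s < ennreal (g' y) then 1 else 0) \<partial>lborel)"
          using g'pos by (intro nn_integral_cong) (auto simp: indicator_def ennreal_less_iff)
        also have "\<dots> = ennreal (1/y\<^sup>2) * indicator {1..} y * ennreal (g' y)"
          by (subst nn_integral_cmult) (auto simp: layer_cake_pt)
        also have "\<dots> = ennreal (g y / y\<^sup>2) * indicator {1..} y"
          using gpos by (auto simp: indicator_def g'_def ennreal_mult[symmetric] mult.commute)
        finally show "(\<integral>\<^sup>+s. (if 1 \<le> y \<and> 0 \<le> s \<and> s < g' y then ennreal (1/y\<^sup>2) else 0) \<partial>lborel)
            = ennreal (g y / y\<^sup>2) * indicator {1..} y" .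
      qed
      also have "\<dots> = 1" by (rule gint)
      finally show "(\<integral>\<^sup>+ \<omega>. sup (ennreal (g 1)) (SUP t. ennreal (g (N t \<omega>))) \<partial>M) \<le> 1"
        using LHS by simp
    qed
  qed
  have iv_sqrt: "(\<integral>\<^sup>+ \<omega>. sup 1 (SUP t. ennreal (sqrt (N t \<omega>))) \<partial>M) \<le> 2" if iv: cond_iv
  proof -
    define g where "g y = sqrt y / 2" for y :: real
    have "(\<integral>\<^sup>+y\<in>{1..}. ennreal (g y / y\<^sup>2) \<partial>lborel) = ennreal (0 - (- 1 / sqrt 1))"
    proof (rule nn_integral_FTC_atLeast[where F="\<lambda>y. - 1 / sqrt y" and T=0])
      show "(\<lambda>y. g y / y\<^sup>2) \<in> borel_measurable borel" unfolding g_def by measurable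
      show "((\<lambda>y. - 1 / sqrt y) has_real_derivative g x / x\<^sup>2) (at x)" if "1 \<le> x" for x
      proof -
        have x: "0 < x" using that by simp
        have "((\<lambda>y. - 1 / sqrt y) has_real_derivative 1 / (2 * sqrt x * x)) (at x)"
          using x by (auto intro!: derivative_eq_intros simp: field_simps)
        moreover have "1 / (2 * sqrt x * x) = g x / x\<^sup>2"
          using x by (simp add: g_def field_simps power2_eq_square)
        ultimately show ?thesis by simp
      qed
      show "0 \<le> g x / x\<^sup>2" if "1 \<le> x" for x using that by (simp add: g_def)
      show "((\<lambda>y::real. - 1 / sqrt y) \<longlongrightarrow> 0) at_top" by real_asymp
    qed
    then have gint: "(\<integral>\<^sup>+y\<in>{1..}. ennreal (g y / y\<^sup>2) \<partial>lborel) = 1" by simp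
    have gmono: "mono_on {0..} g" unfolding g_def by (auto intro!: mono_onI)
    have H: "(\<integral>\<^sup>+ \<omega>. sup (ennreal (g 1)) (SUP t. ennreal (g (N t \<omega>))) \<partial>M) \<le> 1"
    proof -
      have "\<forall>y\<ge>0. 0 \<le> g y" by (simp add: g_def)
      then show ?thesis using iv gint gmono unfolding cond_iv_def by blast
    qed
    have two: "ennreal r = 2 * ennreal (r/2)" for r :: real
    proof (cases "r \<ge> 0")
      case True
      have "ennreal 2 * ennreal (r/2) = ennreal (2 * (r/2))" by (rule ennreal_mult[symmetric]) (use True in auto)
      then show ?thesis by simp
    qed (simp add: ennreal_neg)
    have pt: "sup 1 (SUP t. ennreal (sqrt (N t \<omega>))) \<le> 2 * sup (ennreal (g 1)) (SUP t. ennreal (g (N t \<omega>)))" for \<omega>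
    proof (rule sup_least)
      have "(1::ennreal) = 2 * ennreal (g 1)" using two[of 1] by (simp add: g_def)
      also have "\<dots> \<le> 2 * sup (ennreal (g 1)) (SUP t. ennreal (g (N t \<omega>)))" by (intro mult_left_mono) auto
      finally show "1 \<le> 2 * sup (ennreal (g 1)) (SUP t. ennreal (g (N t \<omega>)))" .
      show "(SUP t. ennreal (sqrt (N t \<omega>))) \<le> 2 * sup (ennreal (g 1)) (SUP t. ennreal (g (N t \<omega>)))"
      proof (rule SUP_least)
        fix t
        have "ennreal (sqrt (N t \<omega>)) = 2 * ennreal (g (N t \<omega>))"
          using two[of "sqrt (N t \<omega>)"] by (simp add: g_def)
        also have "\<dots> \<le> 2 * sup (ennreal (g 1)) (SUP t. ennreal (g (N t \<omega>)))"
          by (intro mult_left_mono le_supI2 SUP_upper) auto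
        finally show "ennreal (sqrt (N t \<omega>)) \<le> 2 * sup (ennreal (g 1)) (SUP t. ennreal (g (N t \<omega>)))" .
      qed
    qed
    have "(\<integral>\<^sup>+ \<omega>. sup 1 (SUP t. ennreal (sqrt (N t \<omega>))) \<partial>M)
        \<le> (\<integral>\<^sup>+ \<omega>. 2 * sup (ennreal (g 1)) (SUP t. ennreal (g (N t \<omega>))) \<partial>M)"
      by (intro nn_integral_mono pt)
    also have "\<dots> = 2 * (\<integral>\<^sup>+ \<omega>. sup (ennreal (g 1)) (SUP t. ennreal (g (N t \<omega>))) \<partial>M)"
      unfolding g_def by (rule nn_integral_cmult) measurable
    also have "\<dots> \<le> 2 * 1" by (intro mult_left_mono H) auto
    finally show ?thesis by simp
  qed
  show ?thesis using i_ii ii_i i_iii iii_iv iv_sqrt by blast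
qed

end
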